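(* Let $(\mu,\varphi,\omega^*,\omega^\varepsilon)\in\mathbb F^\times\times\mathbb F^3$. For any $\kappa,\lambda,c\in\mathbb F^\times$, the quadruple $(\kappa\lambda,\mu\lambda,c,\lambda)$ is feasible for $(\mu,\varphi,\omega^*,\omega^\varepsilon)$ if and only if: (i) $\kappa$ is a root of $\frac{x^4}{\mu q}-\frac{\omega^\varepsilon+q^{-1}\varphi}{q+q^{-1}}x^3+(\omega^*-\mu q^{-1}-\mu^{-1}q)x^2-\frac{\omega^\varepsilon-q\varphi}{q+q^{-1}}x+\mu q$; (ii) $\lambda$ is a root of $\kappa\mu q x^6+\left(\kappa^{-1}\mu q-\frac{\omega^\varepsilon-q\varphi}{q+q^{-1}}\right)x^4+\left(\frac{\omega^\varepsilon+q^{-1}\varphi}{q+q^{-1}}-\kappa\mu^{-1}q^{-1}\right)x^2-\frac{1}{\kappa\mu q}$; (iii) $c$ is a root of $x^2-rx+1$, where $r=\frac{\varphi+(\kappa\lambda+\kappa^{-1}\lambda^{-1})(\mu\lambda q-\mu^{-1}\lambda^{-1}q^{-1})}{\lambda-\lambda^{-1}}$ if $\lambda^2\ne1$ and $r=\frac{\omega^\varepsilon-(\kappa\lambda+\kappa^{-1}\lambda^{-1})(\mu\lambda+\mu^{-1}\lambda^{-1})}{\lambda q+\lambda^{-1}q^{-1}}$ if $\lambda^2=1$.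
   Context: $\mathbb F$ is an algebraically closed field and $q\in\mathbb F^\times$ is a root of unity of order $d\notin\{1,2,4\}$ (so $q^4\ne1$). For $(a,b,c,\lambda)\in(\mathbb F^\times)^4$ and $(\mu,\varphi,\omega^*,\omega^\varepsilon)\in\mathbb F^\times\times\mathbb F^3$, $(a,b,c,\lambda)$ is called feasible for $(\mu,\varphi,\omega^*,\omega^\varepsilon)$ if $\mu=b\lambda^{-1}$, $\varphi=(c+c^{-1})(\lambda-\lambda^{-1})-(a+a^{-1})(bq-b^{-1}q^{-1})$, $\omega^*=(c+c^{-1})(a+a^{-1})+(b+b^{-1})(\lambda q+\lambda^{-1}q^{-1})$, and $\omega^\varepsilon=(a+a^{-1})(b+b^{-1})+(c+c^{-1})(\lambda q+\lambda^{-1}q^{-1})$. *)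

theory Defs
  imports "HOL-Computational_Algebra.Polynomial"
begin

definition alg_closed_field :: "'a::field itself \<Rightarrow> bool" where
  "alg_closed_field _ \<longleftrightarrow> (\<forall>p :: 'a poly. degree p \<ge> 1 \<longrightarrow> (\<exists>x. poly p x = 0))"

definition root_of_unity_order :: "'a::field \<Rightarrow> nat \<Rightarrow> bool" where
  "root_of_unity_order q d \<longleftrightarrow> d > 0 \<and> q ^ d = 1 \<and> (\<forall>k. 0 < k \<and> k < d \<longrightarrow> q ^ k \<noteq> 1)"

definition feasible :: "'a::field \<Rightarrow> 'a \<Rightarrow> 'a \<Rightarrow> 'a \<Rightarrow> 'a \<Rightarrow> 'a \<Rightarrow> 'a \<Rightarrow> 'a \<Rightarrow> 'a \<Rightarrow> bool" where
  "feasible q a b c lam mu phi wS wE \<longleftrightarrow>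
     mu = b * inverse lam \<and>
     phi = (c + inverse c) * (lam - inverse lam) - (a + inverse a) * (b * q - inverse b * inverse q) \<and>
     wS = (c + inverse c) * (a + inverse a) + (b + inverse b) * (lam * q + inverse lam * inverse q) \<and>
     wE = (a + inverse a) * (b + inverse b) + (c + inverse c) * (lam * q + inverse lam * inverse q)"

end

theory Submission
  imports Defs
begin

theorem theorem5p1:
  fixes q mu phi wS wE \<kappa> lam c :: "'a::field"
    and d :: nat
  assumes "alg_closed_field TYPE('a)"
    and "root_of_unity_order q d" and "d \<notin> {1, 2, 4}"
    and "mu \<noteq> 0" and "\<kappa> \<noteq> 0" and "lam \<noteq> 0" and "c \<noteq> 0"
  shows "feasible q (\<kappa> * lam) (mu * lam) c lam mu phi wS wE \<longleftrightarrow>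
    ( \<kappa> ^ 4 / (mu * q)
        - (wE + inverse q * phi) / (q + inverse q) * \<kappa> ^ 3
        + (wS - mu * inverse q - inverse mu * q) * \<kappa> ^ 2
        - (wE - q * phi) / (q + inverse q) * \<kappa>
        + mu * q = 0 \<and>
      \<kappa> * mu * q * lam ^ 6
        + (inverse \<kappa> * mu * q - (wE - q * phi) / (q + inverse q)) * lam ^ 4
        + ((wE + inverse q * phi) / (q + inverse q) - \<kappa> * inverse mu * inverse q) * lam ^ 2
        - 1 / (\<kappa> * mu * q) = 0 \<and>
      (let r = (if lam ^ 2 \<noteq> 1
                then (phi + (\<kappa> * lam + inverse \<kappa> * inverse lam) *
                        (mu * lam * q - inverse mu * inverse lam * inverse q)) / (lam - inverse lam)
                else (wE - (\<kappa> * lam + inverse \<kappa> * inverse lam) *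
                        (mu * lam + inverse mu * inverse lam)) / (lam * q + inverse lam * inverse q))
       in c ^ 2 - r * c + 1 = 0))"
proof -
  note nz = assms(4-7)
  have d0: "d > 0" and qd: "q ^ d = 1" and qmin: "\<And>k. 0 < k \<Longrightarrow> k < d \<Longrightarrow> q ^ k \<noteq> 1"
    using assms(2) unfolding root_of_unity_order_def by auto
  have q0: "q \<noteq> 0" using qd d0 by (metis power_0_left less_numeral_extra(3) zero_neq_one)
  have q4: "q ^ 4 \<noteq> 1"
  proof
    assume h: "q ^ 4 = 1"
    show False
    proof (cases "d = 3")
      case True
      then have "q ^ 3 = 1" using qd by simp
      then have "q = 1" using h by (metis power_Suc numeral_3_eq_3 numeral_Bit0 mult_1 Suc_numeral semiring_norm(2) semiring_norm(8) numeral_One mult.commute)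
      then show False using qmin[of 1] True by simp
    next
      case False
      then have "d > 4" using assms(3) d0 by auto
      then show False using qmin[of 4] h by simp
    qed
  qed
  have qq: "q * q + 1 \<noteq> 0"
  proof
    assume "q * q + 1 = 0"
    then have "q * q = -1" by (simp add: eq_neg_iff_add_eq_0)
    then have "q ^ 4 = 1" by (metis (no_types) mult_minus1 power2_eq_square power_mult numeral_Bit0 numeral_One power2_minus one_power2 mult_2 power_add)
    then show False using q4 by simp
  qed
  have Q0: "q + inverse q \<noteq> 0"
  proof
    assume "q + inverse q = 0"
    then have "q * (q + inverse q) = 0" by simp
    then have "q * q + 1 = 0" using q0 by (simp add: distrib_left)
    then show False using qq by simp
  qed
  define A where "A = \<kappa> * lam + inverse \<kappa> * inverse lam"
  define B where "B = mu * lam + inverse mu * inverse lam"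
  define C where "C = c + inverse c"
  define L where "L = lam * q + inverse lam * inverse q"
  define U where "U = (wE + inverse q * phi) / (q + inverse q)"
  define V where "V = (wE - q * phi) / (q + inverse q)"
  define X where "X = (U - \<kappa> / (mu * q) - 1 / (\<kappa> * mu * q * lam ^ 2)) / lam"
  define Y where "Y = lam * (V - \<kappa> * mu * q * lam ^ 2 - mu * q / \<kappa>)"
  define M where "M = mu * lam * q - inverse mu * inverse lam * inverse q"
  define dU where "dU = U - (C * lam + A / (mu * lam * q))"
  define dV where "dV = V - (C / lam + A * mu * lam * q)"
  define D1 where "D1 = wE - (A * B + C * L)"
  define D2 where "D2 = phi - (C * (lam - inverse lam) - A * M)"
  define dS where "dS = wS - (C * A + B * L)"
  define P1 where "P1 = \<kappa> ^ 4 / (mu * q)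
        - (wE + inverse q * phi) / (q + inverse q) * \<kappa> ^ 3
        + (wS - mu * inverse q - inverse mu * q) * \<kappa> ^ 2
        - (wE - q * phi) / (q + inverse q) * \<kappa>
        + mu * q"
  define P2 where "P2 = \<kappa> * mu * q * lam ^ 6
        + (inverse \<kappa> * mu * q - (wE - q * phi) / (q + inverse q)) * lam ^ 4
        + ((wE + inverse q * phi) / (q + inverse q) - \<kappa> * inverse mu * inverse q) * lam ^ 2
        - 1 / (\<kappa> * mu * q)"
  define r where "r = (if lam ^ 2 \<noteq> 1
                then (phi + (\<kappa> * lam + inverse \<kappa> * inverse lam) *
                        (mu * lam * q - inverse mu * inverse lam * inverse q)) / (lam - inverse lam)
                else (wE - (\<kappa> * lam + inverse \<kappa> * inverse lam) *
                        (mu * lam + inverse mu * inverse lam)) / (lam * q + inverse lam * inverse q))"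
  have r_alt: "r = (if lam ^ 2 \<noteq> 1 then (phi + A * M) / (lam - inverse lam) else (wE - A * B) / L)"
    unfolding r_def A_def M_def B_def L_def by simp
  have feas: "feasible q (\<kappa> * lam) (mu * lam) c lam mu phi wS wE \<longleftrightarrow> D2 = 0 \<and> dS = 0 \<and> D1 = 0"
    unfolding feasible_def D1_def D2_def dS_def A_def B_def C_def L_def M_def using nz q0
    by (auto simp: field_simps)
  have qq': "1 + q * q \<noteq> 0" using qq by (simp add: add.commute)
  have qq3: "q + q * (q * q) \<noteq> 0"
  proof -
    have "q + q * (q * q) = q * (1 + q * q)" by (simp add: algebra_simps)
    then show ?thesis using q0 qq' by simp
  qed
  have UQ: "U * (q + inverse q) = wE + inverse q * phi" using Q0 by (simp add: U_def)
  have VQ: "V * (q + inverse q) = wE - q * phi" using Q0 by (simp add: V_def)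
  have "(U - V) * (q + inverse q) = phi * (q + inverse q)"
    using UQ VQ by (simp add: algebra_simps)
  then have id6: "phi = U - V" using Q0 by simp
  have "(q * U + V / q) * (q + inverse q) = q * (U * (q + inverse q)) + (V * (q + inverse q)) / q"
    using q0 by (simp add: field_simps)
  also have "\<dots> = wE * (q + inverse q)" unfolding UQ VQ using q0
    by (simp add: field_simps)
  finally have id7: "wE = q * U + V / q" using Q0 by simp
  have P1_alt: "P1 = \<kappa> ^ 4 / (mu * q) - U * \<kappa> ^ 3 + (wS - mu * inverse q - inverse mu * q) * \<kappa> ^ 2
        - V * \<kappa> + mu * q"
    unfolding P1_def U_def V_def by simp
  have P2_alt: "P2 = \<kappa> * mu * q * lam ^ 6 + (inverse \<kappa> * mu * q - V) * lam ^ 4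
        + (U - \<kappa> * inverse mu * inverse q) * lam ^ 2 - 1 / (\<kappa> * mu * q)"
    unfolding P2_def U_def V_def by simp
  have id1: "dU * (q + inverse q) = D1 + D2 / q"
    unfolding dU_def D1_def D2_def A_def B_def C_def L_def M_def id6 id7 using nz q0
    by (simp add: field_simps; algebra)
  have id2: "dV * (q + inverse q) = D1 - q * D2"
    unfolding dV_def D1_def D2_def A_def B_def C_def L_def M_def id6 id7 using nz q0
    by (simp add: field_simps; algebra)
  have id3: "P1 = \<kappa>^2 * dS - \<kappa>^3 * dU - \<kappa> * dV"
    unfolding P1_alt dS_def dU_def dV_def A_def B_def C_def L_def using nz q0
    by (simp add: field_simps; algebra)
  have id4: "P2 = lam^2 * (dU - lam^2 * dV)"
    unfolding P2_alt dU_def dV_def A_def B_def C_def L_def using nz q0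
    by (simp add: field_simps; algebra)
  have id5: "P2 = lam^3 * (X - Y)"
    unfolding P2_alt X_def Y_def using nz q0
    by (simp add: field_simps; algebra)
  have id8: "U = X * lam + A / (mu * lam * q)"
    unfolding X_def A_def using nz q0
    by (simp add: field_simps; algebra)
  have id9: "V = Y / lam + A * mu * lam * q"
    unfolding Y_def A_def using nz q0
    by (simp add: field_simps; algebra)
  have cC: "c ^ 2 - r * c + 1 = c * (C - r)"
    unfolding C_def using nz by (simp add: field_simps power2_eq_square)
  have cC2: "c ^ 2 - r * c + 1 = 0 \<longleftrightarrow> C = r" using cC nz by simp
  have Lne: "L \<noteq> 0" if "lam ^ 2 = 1"
  proof
    assume L0: "L = 0"
    have "lam * q * L = lam ^ 2 * q ^ 2 + 1" unfolding L_def using nz q0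
      by (simp add: field_simps power2_eq_square)
    then have "q * q + 1 = 0" using L0 that by (simp add: power2_eq_square)
    then show False using qq by simp
  qed
  have lne: "lam - inverse lam \<noteq> 0" if "lam ^ 2 \<noteq> 1"
  proof
    assume h: "lam - inverse lam = 0"
    have "lam * (lam - inverse lam) = lam ^ 2 - 1" using nz by (simp add: field_simps power2_eq_square)
    then show False using h that by simp
  qed
  have fwd: "P1 = 0 \<and> P2 = 0 \<and> C = r" if "D2 = 0" "dS = 0" "D1 = 0"
  proof -
    have "dU = 0" using id1 that Q0 by simp
    moreover have "dV = 0" using id2 that Q0 by simp
    ultimately have "P1 = 0" "P2 = 0" using id3 id4 that by simp_all
    moreover have "C = r"
    proof (cases "lam ^ 2 = 1")
      case True
      have "wE - A * B = C * L" using that(3) unfolding D1_def by (simp add: algebra_simps)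
      then show ?thesis using True Lne r_alt by simp
    next
      case False
      have "phi + A * M = C * (lam - inverse lam)" using that(1) unfolding D2_def by (simp add: algebra_simps)
      then show ?thesis using False lne r_alt by simp
    qed
    ultimately show ?thesis by simp
  qed
  have bwd: "D2 = 0 \<and> dS = 0 \<and> D1 = 0" if "P1 = 0" "P2 = 0" "C = r"
  proof -
    have XY: "Y = X" using id5 that(2) nz by simp
    have rX: "r = X"
    proof (cases "lam ^ 2 = 1")
      case True
      have "wE - A * B = X * L" unfolding id7 id8 id9 XY B_def L_def using nz q0
        by (simp add: field_simps; algebra)
      then show ?thesis using True Lne r_alt by simp
    next
      case False
      have "phi + A * M = X * (lam - inverse lam)" unfolding id6 id8 id9 XY M_def using nz q0
        by (simp add: field_simps; algebra)
      then show ?thesis using False lne r_alt by simp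
    qed
    have "dU = 0" unfolding dU_def using id8 that(3) rX by simp
    moreover have "dV = 0" unfolding dV_def using id9 that(3) rX XY by simp
    ultimately have "dS = 0" using id3 that(1) nz by simp
    have e1: "D1 + D2 / q = 0" using id1 \<open>dU = 0\<close> by simp
    have e2: "D1 - q * D2 = 0" using id2 \<open>dV = 0\<close> by simp
    have "D2 * (inverse q + q) = 0" using e1 e2 q0
      by (simp add: field_simps; algebra)
    then have "D2 = 0" using Q0 by (simp add: add.commute)
    then show ?thesis using e1 \<open>dS = 0\<close> by simp
  qed
  have goal: "feasible q (\<kappa> * lam) (mu * lam) c lam mu phi wS wE \<longleftrightarrow>
     (P1 = 0 \<and> P2 = 0 \<and> c ^ 2 - r * c + 1 = 0)"
    using feas fwd bwd cC2 by blast
  show ?thesis using goal unfolding P1_def P2_def r_def Let_def .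
qed

end
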